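(* Let $\mathbb{K}$ be a positive commutative monoid, and let $H_0$ and $H_1$ be hypergraphs such that $H_0$ is obtained from $H_1$ by a sequence of safe-deletion operations. Then for every collection $D_0$ of $\mathbb{K}$-relations over $H_0$ there exists a collection $D_1$ of $\mathbb{K}$-relations over $H_1$ such that, for every integer $k\ge1$, $D_0$ is $k$-wise consistent if and only if $D_1$ is $k$-wise consistent.
   Context: A commutative monoid $\mathbb{K}=(K,+,0)$ is positive if $p+q=0$ implies $p=q=0$. Attributes have domains; for a finite attribute set $X$, an $X$-tuple assigns each $A\in X$ a value in its domain; $t[Y]$ is restriction. A $\mathbb{K}$-relation over $X$ is a finitely supported function $R$ from $X$-tuples to $K$ (support $R'=\{t:R(t)\ne0\}$); marginals are $R[Y](t)=\sum_{r\in R',r[Y]=t}R(r)$ for $Y\subseteq X$. A collection of $\mathbb{K}$-relations over a hypergraph $H$ with hyperedges $X_1,\dots,X_m$ (vertices viewed as attributes) is a collection $R_1(X_1),\dots,R_m(X_m)$; it is $k$-wise consistent if for every $q\le k$ and $i_1,\dots,i_q\in[m]$ there is a $\mathbb{K}$-relation $W$ over $X_{i_1}\cup\dots\cup X_{i_q}$ with $W[X_{i_j}]=R_{i_j}$ for all $j$. For a hypergraph $H=(V,E)$ and $W\subseteq V$, the induced hypergraph $H[W]$ has vertex set $W$ and hyperedges the non-empty sets $X\cap W$ for $X\in E$. A vertex-deletion replaces $H$ by $H[V\setminus\{u\}]$ for some $u\in V$; a covered-edge-deletion replaces $H$ by $(V,E\setminus\{e\})$ for some $e\in E$ with $e\subseteq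 f$ for some $f\in E\setminus\{e\}$. Both are safe-deletion operations. *)

theory Defs
  imports Main
begin

text \<open>Attributes have type 'a, attribute values type 'v (the domain of every
attribute is the value type). An X-tuple is a partial map with domain exactly X;
restriction t[Y] is map restriction.\<close>

definition positive_monoid :: "'k::comm_monoid_add itself \<Rightarrow> bool" where
  "positive_monoid _ \<longleftrightarrow> (\<forall>p q :: 'k. p + q = 0 \<longrightarrow> p = 0 \<and> q = 0)"

definition krel :: "'a set \<Rightarrow> (('a \<rightharpoonup> 'v) \<Rightarrow> 'k::comm_monoid_add) \<Rightarrow> bool" where
  "krel X R \<longleftrightarrow> finite {t. R t \<noteq> 0} \<and> (\<forall>t. R t \<noteq> 0 \<longrightarrow> dom t = X)"

definition marg :: "(('a \<rightharpoonup> 'v) \<Rightarrow> 'k::comm_monoid_add) \<Rightarrow> 'a set \<Rightarrow> ('a \<rightharpoonup> 'v) \<Rightarrow> 'k" where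
  "marg R Y t = (\<Sum>r \<in> {r. R r \<noteq> 0 \<and> r |` Y = t}. R r)"

definition hypergraph :: "'a set \<Rightarrow> 'a set set \<Rightarrow> bool" where
  "hypergraph V E \<longleftrightarrow> finite V \<and> (\<forall>X\<in>E. X \<subseteq> V \<and> X \<noteq> {})"

definition collection_over :: "'a set set \<Rightarrow> ('a set \<Rightarrow> ('a \<rightharpoonup> 'v) \<Rightarrow> 'k::comm_monoid_add) \<Rightarrow> bool" where
  "collection_over E D \<longleftrightarrow> (\<forall>X\<in>E. krel X (D X))"

text \<open>k-wise consistency: every choice of at most k hyperedges (repetitions are
irrelevant, so we range over sets of at most k hyperedges) admits a witness.\<close>
definition kwise_consistent :: "nat \<Rightarrow> 'a set set \<Rightarrow> ('a set \<Rightarrow> ('a \<rightharpoonup> 'v) \<Rightarrow> 'k::comm_monoid_add) \<Rightarrow> bool" where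
  "kwise_consistent k E D \<longleftrightarrow>
     (\<forall>F. F \<subseteq> E \<longrightarrow> card F \<le> k \<longrightarrow>
        (\<exists>W. krel (\<Union>F) W \<and> (\<forall>X\<in>F. marg W X = D X)))"

definition induced :: "'a set set \<Rightarrow> 'a set \<Rightarrow> 'a set set" where
  "induced E W = {X \<inter> W | X. X \<in> E \<and> X \<inter> W \<noteq> {}}"

definition safe_deletion :: "('a set \<times> 'a set set) \<Rightarrow> ('a set \<times> 'a set set) \<Rightarrow> bool" where
  "safe_deletion H H' \<longleftrightarrow>
     (\<exists>u \<in> fst H. H' = (fst H - {u}, induced (snd H) (fst H - {u})))
   \<or> (\<exists>e \<in> snd H. (\<exists>f \<in> snd H - {e}. e \<subseteq> f) \<and> H' = (fst H, snd H - {e}))"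

end

theory Submission
  imports Defs
begin

lemma krel_fin: "krel X R \<Longrightarrow> finite {t. R t \<noteq> 0}"
  by (simp add: krel_def)

lemma marg_nz:
  assumes "marg W A t \<noteq> 0" shows "{r. W r \<noteq> 0 \<and> r |` A = t} \<noteq> {}"
proof
  assume e: "{r. W r \<noteq> 0 \<and> r |` A = t} = {}"
  have "marg W A t = 0" unfolding marg_def by (simp only: e sum.empty)
  then show False using assms by simp
qed

lemma rr: "B \<subseteq> A \<Longrightarrow> r |` A |` B = r |` B"
  by (auto simp: restrict_map_def fun_eq_iff)

lemma marg_marg:
  assumes fin: "finite {r. W r \<noteq> 0}" and BA: "B \<subseteq> A"
  shows "marg (marg W A) B = marg W B"
proof
  fix t
  let ?S = "{r. W r \<noteq> 0}"
  let ?T = "{s. s \<in> (\<lambda>r. r |` A) ` ?S \<and> s |` B = t}"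
  have finT: "finite ?T" using fin by auto
  have AB: "A \<inter> B = B" using BA by blast
  have "marg (marg W A) B t = (\<Sum>s\<in>?T. marg W A s)"
    unfolding marg_def[of "marg W A"]
  proof (rule sum.mono_neutral_left[OF finT])
    show "{r. marg W A r \<noteq> 0 \<and> r |` B = t} \<subseteq> ?T"
    proof
      fix s assume s: "s \<in> {r. marg W A r \<noteq> 0 \<and> r |` B = t}"
      then have "{r. W r \<noteq> 0 \<and> r |` A = s} \<noteq> {}"
        by (intro marg_nz) simp
      then show "s \<in> ?T" using s by auto
    qed
    show "\<forall>i\<in>?T - {r. marg W A r \<noteq> 0 \<and> r |` B = t}. marg W A i = 0" by auto
  qed
  also have "\<dots> = (\<Sum>s\<in>?T. \<Sum>r\<in>{r \<in> {r\<in>?S. r |` B = t}. r |` A = s}. W r)"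
    unfolding marg_def
  proof (intro sum.cong refl)
    fix s assume "s \<in> ?T"
    then have sB: "s |` B = t" by blast
    have "r |` B = t" if "r |` A = s" for r
      using rr[OF BA, of r] sB that by simp
    then show "{r. W r \<noteq> 0 \<and> r |` A = s} = {r \<in> {r\<in>?S. r |` B = t}. r |` A = s}" by blast
  qed
  also have "\<dots> = (\<Sum>r\<in>{r\<in>?S. r |` B = t}. W r)"
  proof (rule sum.group)
    show "finite {r\<in>?S. r |` B = t}" using fin by auto
    show "finite ?T" by (rule finT)
    show "(\<lambda>r. r |` A) ` {r\<in>?S. r |` B = t} \<subseteq> ?T"
      using BA by (auto simp: Int_absorb1)
  qed
  also have "\<dots> = marg W B t" unfolding marg_def by (intro sum.cong) auto
  finally show "marg (marg W A) B t = marg W B t" .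
qed


lemma restr_dom: "dom r = X \<Longrightarrow> r |` X = r"
  by (auto simp: restrict_map_def fun_eq_iff)

lemma marg_self:
  assumes "krel X R" shows "marg R X = R"
proof
  fix t
  show "marg R X t = R t"
  proof (cases "R t = 0")
    case True
    have "{r. R r \<noteq> 0 \<and> r |` X = t} = {}"
    proof (rule ccontr)
      assume "{r. R r \<noteq> 0 \<and> r |` X = t} \<noteq> {}"
      then obtain r where r: "R r \<noteq> 0" "r |` X = t" by auto
      then have "dom r = X" using assms by (auto simp: krel_def)
      then have "r |` X = r" by (rule restr_dom)
      then show False using r True by simp
    qed
    then have "marg R X t = 0" unfolding marg_def by (simp only: sum.empty)
    then show ?thesis using True by simp
  next
    case False
    then have "dom t = X" using assms by (auto simp: krel_def)
    have "{r. R r \<noteq> 0 \<and> r |` X = t} = {t}"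
    proof safe
      fix r assume r: "R r \<noteq> 0" "t = r |` X"
      then have "dom r = X" using assms by (auto simp: krel_def)
      then show "r = r |` X" by (rule restr_dom[symmetric])
    next
      show "R t = 0 \<Longrightarrow> False" using False by simp
      show "t |` X = t" using \<open>dom t = X\<close> by (rule restr_dom)
    qed
    then show ?thesis by (simp add: marg_def)
  qed
qed

lemma krel_marg:
  assumes "krel B W" "A \<subseteq> B" shows "krel A (marg W A)"
  unfolding krel_def
proof
  have fin: "finite {r. W r \<noteq> 0}" using assms by (simp add: krel_def)
  have "{t. marg W A t \<noteq> 0} \<subseteq> (\<lambda>r. r |` A) ` {r. W r \<noteq> 0}"
  proof
    fix t assume "t \<in> {t. marg W A t \<noteq> 0}"
    then have "{r. W r \<noteq> 0 \<and> r |` A = t} \<noteq> {}"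
      by (intro marg_nz) simp
    then show "t \<in> (\<lambda>r. r |` A) ` {r. W r \<noteq> 0}" by auto
  qed
  then show "finite {t. marg W A t \<noteq> 0}" using fin finite_subset by blast
  show "\<forall>t. marg W A t \<noteq> 0 \<longrightarrow> dom t = A"
  proof (intro allI impI)
    fix t assume "marg W A t \<noteq> 0"
    then have "{r. W r \<noteq> 0 \<and> r |` A = t} \<noteq> {}"
      by (intro marg_nz) simp
    then obtain r where "W r \<noteq> 0" "r |` A = t" by auto
    moreover then have "dom r = B" using assms by (auto simp: krel_def)
    ultimately show "dom t = A" using assms(2) dom_restrict[of r A] by auto
  qed
qed

lemma krel_marg_empty: "krel {} (marg R {})"
  unfolding krel_def
proof
  have "{t. marg R {} t \<noteq> 0} \<subseteq> {Map.empty}"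
  proof
    fix t assume "t \<in> {t. marg R {} t \<noteq> 0}"
    then have "{r. R r \<noteq> 0 \<and> r |` {} = t} \<noteq> {}"
      by (intro marg_nz) simp
    then show "t \<in> {Map.empty}" by auto
  qed
  then show "finite {t. marg R {} t \<noteq> 0}" using finite_subset by blast
  show "\<forall>t. marg R {} t \<noteq> 0 \<longrightarrow> dom t = {}"
  proof (intro allI impI)
    fix t assume "marg R {} t \<noteq> 0"
    then have "{r. R r \<noteq> 0 \<and> r |` {} = t} \<noteq> {}"
      by (intro marg_nz) simp
    then show "dom t = {}" by auto
  qed
qed

definition extu :: "'a \<Rightarrow> 'v \<Rightarrow> (('a \<rightharpoonup> 'v) \<Rightarrow> 'k::comm_monoid_add) \<Rightarrow> ('a \<rightharpoonup> 'v) \<Rightarrow> 'k" where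
  "extu u c R t = (if t u = Some c then R (t(u:=None)) else 0)"

lemma krel_ext:
  assumes "krel A R" "u \<notin> A" shows "krel (insert u A) (extu u c R)"
  unfolding krel_def
proof
  have "{t. extu u c R t \<noteq> 0} \<subseteq> (\<lambda>s. s(u \<mapsto> c)) ` {s. R s \<noteq> 0}"
  proof
    fix t assume "t \<in> {t. extu u c R t \<noteq> 0}"
    then have t: "t u = Some c" "R (t(u:=None)) \<noteq> 0" by (auto simp: extu_def split: if_splits)
    then have "t = (t(u:=None))(u \<mapsto> c)" by (auto simp: fun_eq_iff)
    then show "t \<in> (\<lambda>s. s(u \<mapsto> c)) ` {s. R s \<noteq> 0}" using t by blast
  qed
  then show "finite {t. extu u c R t \<noteq> 0}"
    using assms finite_subset by (blast dest: krel_fin)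
  show "\<forall>t. extu u c R t \<noteq> 0 \<longrightarrow> dom t = insert u A"
  proof (intro allI impI)
    fix t assume "extu u c R t \<noteq> 0"
    then have t: "t u = Some c" "R (t(u:=None)) \<noteq> 0" by (auto simp: extu_def split: if_splits)
    then have "dom (t(u:=None)) = A" using assms unfolding krel_def by blast
    then have d: "dom t - {u} = A" by simp
    have "u \<in> dom t" using t by auto
    then show "dom t = insert u A" using d by auto
  qed
qed

lemma marg_ext_in:
  assumes "krel A R" "u \<notin> A" "B \<subseteq> A"
  shows "marg (extu u c R) (insert u B) = extu u c (marg R B)"
proof
  fix t
  show "marg (extu u c R) (insert u B) t = extu u c (marg R B) t"
  proof (cases "t u = Some c")
    case False
    have "{r. extu u c R r \<noteq> 0 \<and> r |` insert u B = t} = {}"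
    proof (rule ccontr)
      assume "{r. extu u c R r \<noteq> 0 \<and> r |` insert u B = t} \<noteq> {}"
      then obtain r where "extu u c R r \<noteq> 0" "r |` insert u B = t" by auto
      then have "r u = Some c" "t u = r u" by (auto simp: extu_def split: if_splits)
      then show False using False by simp
    qed
    then have "marg (extu u c R) (insert u B) t = 0" unfolding marg_def by (simp only: sum.empty)
    moreover have "extu u c (marg R B) t = 0" using False by (simp add: extu_def)
    ultimately show ?thesis by simp
  next
    case True
    have "marg (extu u c R) (insert u B) t = (\<Sum>s\<in>{s. R s \<noteq> 0 \<and> s |` B = t(u:=None)}. R s)"
      unfolding marg_def
    proof (rule sum.reindex_bij_witness[where i="\<lambda>s. s(u \<mapsto> c)" and j="\<lambda>r. r(u:=None)"])
      fix r assume r: "r \<in> {r. extu u c R r \<noteq> 0 \<and> r |` insert u B = t}"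
      then have ru: "r u = Some c" "R (r(u:=None)) \<noteq> 0" by (auto simp: extu_def split: if_splits)
      show "(r(u:=None))(u \<mapsto> c) = r" using ru by (auto simp: fun_eq_iff)
      have e1: "r |` insert u B = t" using r by simp
      have uB: "u \<notin> B" using assms by auto
      have "(r(u:=None)) |` B = t(u:=None)"
        unfolding e1[symmetric] using uB by (auto simp: fun_eq_iff restrict_map_def)
      then show "r(u:=None) \<in> {s. R s \<noteq> 0 \<and> s |` B = t(u:=None)}"
        using ru by simp
      show "R (r(u:=None)) = extu u c R r" using ru by (simp add: extu_def)
    next
      fix s assume s: "s \<in> {s. R s \<noteq> 0 \<and> s |` B = t(u:=None)}"
      then have "dom s = A" using assms by (auto simp: krel_def)
      then have su: "s u = None" using assms by auto
      show "(s(u \<mapsto> c))(u:=None) = s" using su by (auto simp: fun_eq_iff)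
      show "s(u \<mapsto> c) \<in> {r. extu u c R r \<noteq> 0 \<and> r |` insert u B = t}"
      proof -
        have "(s(u \<mapsto> c))(u:=None) = s" using su by (auto simp: fun_eq_iff)
        then have "extu u c R (s(u \<mapsto> c)) = R s" by (simp add: extu_def)
        moreover have "s(u \<mapsto> c) |` insert u B = t"
        proof
          fix x
          have h: "(s |` B) x = (t(u:=None)) x" using s by simp
          show "(s(u \<mapsto> c) |` insert u B) x = t x"
            using h True by (cases "x = u") (auto simp: restrict_map_def split: if_splits)
        qed
        ultimately show ?thesis using s by simp
      qed
    qed
    also have "\<dots> = extu u c (marg R B) t" using True by (simp add: marg_def extu_def)
    finally show ?thesis .
  qed
qed

lemma marg_ext_out:
  assumes "krel A R" "u \<notin> A" "B \<subseteq> A"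
  shows "marg (extu u c R) B = marg R B"
proof
  fix t
  show "marg (extu u c R) B t = marg R B t"
    unfolding marg_def
  proof (rule sum.reindex_bij_witness[where i="\<lambda>s. s(u \<mapsto> c)" and j="\<lambda>r. r(u:=None)"])
    fix r assume r: "r \<in> {r. extu u c R r \<noteq> 0 \<and> r |` B = t}"
    then have ru: "r u = Some c" "R (r(u:=None)) \<noteq> 0" by (auto simp: extu_def split: if_splits)
    show "(r(u:=None))(u \<mapsto> c) = r" using ru by (auto simp: fun_eq_iff)
    have "(r(u:=None)) |` B = r |` B"
      using assms by (auto simp: fun_eq_iff restrict_map_def)
    then show "r(u:=None) \<in> {s. R s \<noteq> 0 \<and> s |` B = t}"
      using ru r by simp
    show "R (r(u:=None)) = extu u c R r" using ru by (simp add: extu_def)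
  next
    fix s assume s: "s \<in> {s. R s \<noteq> 0 \<and> s |` B = t}"
    then have "dom s = A" using assms by (auto simp: krel_def)
    then have su: "s u = None" using assms by auto
    show "(s(u \<mapsto> c))(u:=None) = s" using su by (auto simp: fun_eq_iff)
    have "(s(u \<mapsto> c))(u:=None) = s" using su by (auto simp: fun_eq_iff)
    then have "extu u c R (s(u \<mapsto> c)) = R s" by (simp add: extu_def)
    moreover have "s(u \<mapsto> c) |` B = t"
    proof
      fix x show "(s(u \<mapsto> c) |` B) x = t x"
        using s assms fun_cong[of "s |` B" t x]
        by (auto simp: restrict_map_def split: if_splits)
    qed
    ultimately show "s(u \<mapsto> c) \<in> {r. extu u c R r \<noteq> 0 \<and> r |` B = t}" using s by simp
  qed
qed


lemma hyp_finE: "hypergraph V E \<Longrightarrow> finite E"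
  unfolding hypergraph_def by (meson Pow_iff finite_Pow_iff finite_subset subsetI)

lemma kw_empty_ok: "krel {} (\<lambda>t. 0::'k::comm_monoid_add)"
  by (simp add: krel_def)

lemma cov_step:
  fixes D0 :: "'a set \<Rightarrow> ('a \<rightharpoonup> 'v) \<Rightarrow> 'k::comm_monoid_add"
  assumes hyp: "hypergraph V E" and eE: "e \<in> E" and fE: "f \<in> E" and fe: "f \<noteq> e" and ef: "e \<subseteq> f"
    and col: "collection_over (E - {e}) D0"
  shows "collection_over E (D0(e := marg (D0 f) e)) \<and>
    (\<forall>k. kwise_consistent k (E - {e}) D0 \<longleftrightarrow> kwise_consistent k E (D0(e := marg (D0 f) e)))"
proof -
  let ?D1 = "D0(e := marg (D0 f) e)"
  have kf: "krel f (D0 f)" using col fE fe by (simp add: collection_over_def)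
  have finE: "finite E" using hyp by (rule hyp_finE)
  have c1: "collection_over E ?D1"
    unfolding collection_over_def
  proof
    fix X assume "X \<in> E"
    then show "krel X (?D1 X)"
      using col kf ef krel_marg[OF kf ef] by (cases "X = e") (auto simp: collection_over_def)
  qed
  have "kwise_consistent k (E - {e}) D0 \<longleftrightarrow> kwise_consistent k E ?D1" for k
  proof
    assume kc: "kwise_consistent k (E - {e}) D0"
    show "kwise_consistent k E ?D1"
      unfolding kwise_consistent_def
    proof (intro allI impI)
      fix F assume FE: "F \<subseteq> E" and cF: "card F \<le> k"
      have finF: "finite F" using finE FE finite_subset by blast
      show "\<exists>W. krel (\<Union>F) W \<and> (\<forall>X\<in>F. marg W X = ?D1 X)"
      proof (cases "e \<in> F")
        case False
        then have "F \<subseteq> E - {e}" using FE by auto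
        then obtain W where W: "krel (\<Union>F) W" "\<forall>X\<in>F. marg W X = D0 X"
          using kc cF unfolding kwise_consistent_def by blast
        then show ?thesis using False by (intro exI[of _ W]) auto
      next
        case True
        let ?F' = "insert f (F - {e})"
        have "card ?F' \<le> card (F - {e}) + 1" using finF by (simp add: card_insert_if)
        also have "\<dots> = card F" using finF True
          using card.remove[OF finF True] by simp
        finally have c': "card ?F' \<le> k" using cF by simp
        have "?F' \<subseteq> E - {e}" using FE fE fe by auto
        then obtain W where W: "krel (\<Union>?F') W" "\<forall>X\<in>?F'. marg W X = D0 X"
          using kc c' unfolding kwise_consistent_def by blast
        have sub: "\<Union>F \<subseteq> \<Union>?F'" using True ef by auto
        have finW: "finite {r. W r \<noteq> 0}" using W(1) by (rule krel_fin)
        show ?thesis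
        proof (intro exI[of _ "marg W (\<Union>F)"] conjI ballI)
          show "krel (\<Union>F) (marg W (\<Union>F))" by (rule krel_marg[OF W(1) sub])
          fix X assume XF: "X \<in> F"
          then have "marg (marg W (\<Union>F)) X = marg W X"
            by (intro marg_marg[OF finW]) auto
          also have "\<dots> = ?D1 X"
          proof (cases "X = e")
            case True
            have "marg W X = marg (marg W f) e" using True ef by (simp add: marg_marg[OF finW])
            also have "\<dots> = marg (D0 f) e" using W(2) by simp
            finally show ?thesis using True by simp
          next
            case False
            then show ?thesis using W(2) XF by simp
          qed
          finally show "marg (marg W (\<Union>F)) X = ?D1 X" .
        qed
      qed
    qed
  next
    assume kc: "kwise_consistent k E ?D1"
    show "kwise_consistent k (E - {e}) D0"
      unfolding kwise_consistent_def
    proof (intro allI impI)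
      fix F assume FE: "F \<subseteq> E - {e}" and cF: "card F \<le> k"
      then obtain W where W: "krel (\<Union>F) W" "\<forall>X\<in>F. marg W X = ?D1 X"
        using kc unfolding kwise_consistent_def by (meson Diff_subset order_trans)
      have "\<forall>X\<in>F. ?D1 X = D0 X" using FE by auto
      then show "\<exists>W. krel (\<Union>F) W \<and> (\<forall>X\<in>F. marg W X = D0 X)" using W by auto
    qed
  qed
  then show ?thesis using c1 by blast
qed


lemma induced_eq: "induced E W = (\<lambda>X. X \<inter> W) ` E - {{}}"
  unfolding induced_def by blast

lemma vert_step:
  fixes D0 :: "'a set \<Rightarrow> ('a \<rightharpoonup> 'v) \<Rightarrow> 'k::comm_monoid_add"
  assumes hyp: "hypergraph V E" and uV: "u \<in> V"
    and col: "collection_over (induced E (V - {u})) D0"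
  shows "\<exists>D1 :: 'a set \<Rightarrow> ('a \<rightharpoonup> 'v) \<Rightarrow> 'k. collection_over E D1 \<and>
    (\<forall>k::nat. k \<ge> 1 \<longrightarrow> (kwise_consistent k (induced E (V - {u})) D0 \<longleftrightarrow> kwise_consistent k E D1))"
proof -
  define E0 where "E0 = induced E (V - {u})"
  have EV: "\<And>X. X \<in> E \<Longrightarrow> X \<subseteq> V \<and> X \<noteq> {}" using hyp by (auto simp: hypergraph_def)
  have IW: "X \<inter> (V - {u}) = X - {u}" if "X \<in> E" for X
    using EV[OF that] by blast
  have E0eq: "E0 = (\<lambda>X. X - {u}) ` E - {{}}"
  proof -
    have "E0 = (\<lambda>X. X \<inter> (V - {u})) ` E - {{}}"
      unfolding E0_def by (rule induced_eq)
    also have "(\<lambda>X. X \<inter> (V - {u})) ` E = (\<lambda>X. X - {u}) ` E"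
      by (rule image_cong[OF refl IW])
    finally show ?thesis .
  qed
  have finE: "finite E" using hyp by (rule hyp_finE)
  have finE0: "finite E0" using finE E0eq by simp
  have E0ne: "\<And>Y. Y \<in> E0 \<Longrightarrow> Y \<noteq> {}" unfolding E0eq by blast
  have kD0: "\<And>Y. Y \<in> E0 \<Longrightarrow> krel Y (D0 Y)" using col by (simp add: E0_def collection_over_def)
  define D0' where "D0' = D0({} := marg (D0 (SOME X. X \<in> E0)) {})"
  define c where "c = (undefined::'v)"
  define D1 where "D1 X = (if u \<in> X then extu u c (D0' (X - {u})) else D0' X)" for X
  have D0'_eq: "\<And>Y. Y \<noteq> {} \<Longrightarrow> D0' Y = D0 Y" by (simp add: D0'_def)
  have kD0e: "krel {} (D0' {})" by (simp add: D0'_def krel_marg_empty)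
  have kD0': "krel (X - {u}) (D0' (X - {u}))" if "X \<in> E" for X
  proof (cases "X - {u} = {}")
    case True then show ?thesis by (simp only: True kD0e)
  next
    case False
    then have "X - {u} \<in> E0" unfolding E0eq using that by blast
    then show ?thesis using kD0 D0'_eq False by simp
  qed
  have colD1: "collection_over E D1"
    unfolding collection_over_def
  proof
    fix X assume XE: "X \<in> E"
    show "krel X (D1 X)"
    proof (cases "u \<in> X")
      case True
      have "krel (insert u (X - {u})) (extu u c (D0' (X - {u})))"
        by (rule krel_ext[OF kD0'[OF XE]]) simp
      then show ?thesis using True by (simp add: D1_def insert_absorb)
    next
      case False
      then show ?thesis using kD0'[OF XE] by (simp add: D1_def)
    qed
  qed
  have key: "marg (D1 X) (X - {u}) = D0 (X - {u})" if XE: "X \<in> E" and ne: "X - {u} \<noteq> {}" for X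
  proof (cases "u \<in> X")
    case True
    have "marg (D1 X) (X - {u}) = marg (D0' (X - {u})) (X - {u})"
      using True by (simp add: D1_def marg_ext_out[OF kD0'[OF XE]])
    also have "\<dots> = D0' (X - {u})" by (rule marg_self[OF kD0'[OF XE]])
    finally show ?thesis using D0'_eq ne by simp
  next
    case False
    then show ?thesis using marg_self[OF kD0'[OF XE]] D0'_eq ne by (simp add: D1_def)
  qed
  have equiv: "kwise_consistent k E0 D0 \<longleftrightarrow> kwise_consistent k E D1" if k1: "k \<ge> 1" for k
  proof
    assume kc0: "kwise_consistent k E0 D0"
    show "kwise_consistent k E D1"
      unfolding kwise_consistent_def
    proof (intro allI impI)
      fix F assume FE: "F \<subseteq> E" and cF: "card F \<le> k"
      have finF: "finite F" using finE FE finite_subset by blast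
      define F' where "F' = (\<lambda>X. X - {u}) ` F - {{}}"
      have F'E0: "F' \<subseteq> E0" unfolding E0eq F'_def using FE by blast
      have "card F' \<le> card ((\<lambda>X. X - {u}) ` F)" unfolding F'_def
        using finF by (intro card_mono) auto
      also have "\<dots> \<le> card F" using finF by (rule card_image_le)
      finally have cF': "card F' \<le> k" using cF by simp
      have UF': "\<Union>F' = \<Union>F - {u}" unfolding F'_def by blast
      have "\<exists>W0. krel (\<Union>F') W0 \<and> (\<forall>Y\<in>F'. marg W0 Y = D0 Y) \<and> ({u} \<in> F \<longrightarrow> marg W0 {} = D0' {})"
      proof (cases "{u} \<in> F")
        case False
        then show ?thesis using kc0 F'E0 cF' unfolding kwise_consistent_def by blast
      next
        case uF: True
        show ?thesis
        proof (cases "F' = {}")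
          case True
          then show ?thesis using kD0e marg_self[OF kD0e] by (intro exI[of _ "D0' {}"]) simp
        next
          case False
          then obtain W0 where W0: "krel (\<Union>F') W0" "\<forall>Y\<in>F'. marg W0 Y = D0 Y"
            using kc0 F'E0 cF' unfolding kwise_consistent_def by blast
          have finW0: "finite {r. W0 r \<noteq> 0}" using W0(1) by (rule krel_fin)
          from False obtain Y where YF': "Y \<in> F'" by blast
          then obtain X where X: "X \<in> F" "Y = X - {u}" "Y \<noteq> {}" unfolding F'_def by blast
          then have "X \<noteq> {u}" by auto
          then have "card {X, {u}} = 2" by simp
          moreover have "card {X, {u}} \<le> card F" using X uF finF by (intro card_mono) auto
          ultimately have k2: "2 \<le> k" using cF by simp
          have YE0: "Y \<in> E0" using YF' F'E0 by blast
          define X0 where "X0 = (SOME X. X \<in> E0)"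
          have X0: "X0 \<in> E0" unfolding X0_def using YE0 by (rule someI)
          have "card {Y, X0} \<le> 2" by (simp add: card_insert_if)
          then have ck: "card {Y, X0} \<le> k" using k2 by linarith
          have sE: "{Y, X0} \<subseteq> E0" using YE0 X0 by blast
          obtain W' where W': "krel (\<Union>{Y, X0}) W'" "\<forall>Z\<in>{Y, X0}. marg W' Z = D0 Z"
            using kc0[unfolded kwise_consistent_def, rule_format, OF sE ck] by blast
          have finW': "finite {r. W' r \<noteq> 0}" using W'(1) by (rule krel_fin)
          have "marg W0 {} = marg (marg W0 Y) {}" by (simp add: marg_marg[OF finW0])
          also have "\<dots> = marg (D0 Y) {}" using W0(2) YF' by simp
          also have "\<dots> = marg (marg W' Y) {}" using W'(2) by simp
          also have "\<dots> = marg W' {}" by (simp add: marg_marg[OF finW'])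
          also have "\<dots> = marg (marg W' X0) {}" by (simp add: marg_marg[OF finW'])
          also have "\<dots> = marg (D0 X0) {}" using W'(2) by simp
          also have "\<dots> = D0' {}" by (simp add: D0'_def X0_def)
          finally show ?thesis using W0 by blast
        qed
      qed
      then obtain W0 where W0: "krel (\<Union>F') W0" "\<forall>Y\<in>F'. marg W0 Y = D0 Y"
        "{u} \<in> F \<longrightarrow> marg W0 {} = D0' {}" by blast
      have uF': "u \<notin> \<Union>F'" using UF' by blast
      have notin: "marg W0 X = D1 X" if XF: "X \<in> F" and uX: "u \<notin> X" for X
      proof -
        have "X \<noteq> {}" using EV XF FE by blast
        then have "X \<in> F'" unfolding F'_def using XF uX by auto
        then show ?thesis using W0(2) D0'_eq \<open>X \<noteq> {}\<close> uX by (simp add: D1_def)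
      qed
      show "\<exists>W. krel (\<Union>F) W \<and> (\<forall>X\<in>F. marg W X = D1 X)"
      proof (cases "u \<in> \<Union>F")
        case False
        then have "\<Union>F = \<Union>F'" using UF' by blast
        then show ?thesis using W0(1) notin False by (intro exI[of _ W0]) auto
      next
        case True
        then have UF: "\<Union>F = insert u (\<Union>F')" using UF' by blast
        show ?thesis
        proof (intro exI[of _ "extu u c W0"] conjI ballI)
          show "krel (\<Union>F) (extu u c W0)" unfolding UF by (rule krel_ext[OF W0(1) uF'])
          fix X assume XF: "X \<in> F"
          show "marg (extu u c W0) X = D1 X"
          proof (cases "u \<in> X")
            case False
            have "X \<subseteq> \<Union>F'" using XF False UF' by blast
            then have "marg (extu u c W0) X = marg W0 X" by (rule marg_ext_out[OF W0(1) uF'])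
            then show ?thesis using notin[OF XF False] by simp
          next
            case uX: True
            have Xe: "X = insert u (X - {u})" using uX by blast
            have sub: "X - {u} \<subseteq> \<Union>F'" using XF UF' by blast
            have "marg (extu u c W0) X = extu u c (marg W0 (X - {u}))"
              by (subst Xe) (rule marg_ext_in[OF W0(1) uF' sub])
            also have "\<dots> = D1 X"
            proof (cases "X - {u} = {}")
              case True
              then have "X = {u}" using uX by blast
              then show ?thesis using W0(3) XF True uX by (simp add: D1_def)
            next
              case False
              then have "X - {u} \<in> F'" unfolding F'_def using XF by blast
              then show ?thesis using W0(2) D0'_eq False uX by (simp add: D1_def)
            qed
            finally show ?thesis .
          qed
        qed
      qed
    qed
  next
    assume kc1: "kwise_consistent k E D1"
    show "kwise_consistent k E0 D0"
      unfolding kwise_consistent_def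
    proof (intro allI impI)
      fix F' assume F'E0: "F' \<subseteq> E0" and cF': "card F' \<le> k"
      have finF': "finite F'" using finE0 F'E0 finite_subset by blast
      define g where "g Y = (SOME X. X \<in> E \<and> X - {u} = Y)" for Y
      have g: "g Y \<in> E \<and> g Y - {u} = Y" if "Y \<in> F'" for Y
      proof -
        have "Y \<in> (\<lambda>X. X - {u}) ` E - {{}}" using that F'E0 unfolding E0eq by blast
        then have "\<exists>X. X \<in> E \<and> X - {u} = Y" by (auto simp: image_iff)
        then show ?thesis unfolding g_def by (rule someI_ex)
      qed
      let ?F = "g ` F'"
      have gE: "g Y \<in> E" if "Y \<in> F'" for Y using g[OF that] by (rule conjunct1)
      have FE: "?F \<subseteq> E" by (rule image_subsetI) (rule gE)
      have cF: "card ?F \<le> k" using card_image_le[OF finF', of g] cF' by simp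
      obtain W1 where W1: "krel (\<Union>?F) W1" "\<forall>X\<in>?F. marg W1 X = D1 X"
        using kc1[unfolded kwise_consistent_def, rule_format, OF FE cF] by (elim exE conjE) (erule (1) that)
      have finW1: "finite {r. W1 r \<noteq> 0}" using W1(1) by (rule krel_fin)
      have Ysub: "Y \<subseteq> g Y" if "Y \<in> F'" for Y
      proof -
        have "g Y - {u} \<subseteq> g Y" by blast
        then show ?thesis using g[OF that] by simp
      qed
      have sub: "\<Union>F' \<subseteq> \<Union>?F"
      proof
        fix y assume "y \<in> \<Union>F'"
        then obtain Y where "Y \<in> F'" "y \<in> Y" by blast
        then have "y \<in> g Y" "g Y \<in> ?F" using Ysub by blast+
        then show "y \<in> \<Union>?F" by blast
      qed
      show "\<exists>W. krel (\<Union>F') W \<and> (\<forall>Y\<in>F'. marg W Y = D0 Y)"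
      proof (intro exI[of _ "marg W1 (\<Union>F')"] conjI ballI)
        show "krel (\<Union>F') (marg W1 (\<Union>F'))" by (rule krel_marg[OF W1(1) sub])
        fix Y assume YF: "Y \<in> F'"
        have "marg (marg W1 (\<Union>F')) Y = marg W1 Y" using YF by (intro marg_marg[OF finW1]) auto
        also have "\<dots> = marg (marg W1 (g Y)) Y"
          using marg_marg[OF finW1 Ysub[OF YF]] by simp
        also have "\<dots> = marg (marg W1 (g Y)) (g Y - {u})"
          using g[OF YF] by simp
        also have "\<dots> = marg (D1 (g Y)) (g Y - {u})" using W1(2) YF by simp
        also have "\<dots> = D0 (g Y - {u})"
        proof (rule key)
          show "g Y \<in> E" using g[OF YF] by blast
          have "Y \<noteq> {}" using E0ne YF F'E0 by blast
          then show "g Y - {u} \<noteq> {}" using g[OF YF] by simp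
        qed
        also have "\<dots> = D0 Y" using g[OF YF] by simp
        finally show "marg (marg W1 (\<Union>F')) Y = D0 Y" .
      qed
    qed
  qed
  show ?thesis
  proof (intro exI[of _ D1] conjI allI impI)
    show "collection_over E D1" by (rule colD1)
    fix k :: nat assume "k \<ge> 1"
    then show "kwise_consistent k (induced E (V - {u})) D0 = kwise_consistent k E D1"
      using equiv unfolding E0_def by simp
  qed
qed


definition good :: "'a set set \<Rightarrow> ('a set \<Rightarrow> ('a \<rightharpoonup> 'v) \<Rightarrow> 'k::comm_monoid_add) \<Rightarrow> 'a set set \<Rightarrow> ('a set \<Rightarrow> ('a \<rightharpoonup> 'v) \<Rightarrow> 'k) \<Rightarrow> bool" where
  "good E0 D0 E1 D1 \<longleftrightarrow> collection_over E1 D1 \<and>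
     (\<forall>k::nat. k \<ge> 1 \<longrightarrow> (kwise_consistent k E0 D0 \<longleftrightarrow> kwise_consistent k E1 D1))"

lemma good_trans: "good E0 D0 E2 D2 \<Longrightarrow> good E2 D2 E1 D1 \<Longrightarrow> good E0 D0 E1 D1"
  unfolding good_def by simp

lemma good_refl: "collection_over E D \<Longrightarrow> good E D E D"
  unfolding good_def by simp

lemma one_step_hyp:
  assumes hyp: "hypergraph (fst H) (snd H)" and sd: "safe_deletion H H'"
  shows "hypergraph (fst H') (snd H')"
  using sd unfolding safe_deletion_def
proof (elim disjE bexE conjE)
  fix u assume H': "H' = (fst H - {u}, induced (snd H) (fst H - {u}))"
  show ?thesis using hyp unfolding H' hypergraph_def induced_def by auto
next
  fix e assume H': "H' = (fst H, snd H - {e})"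
  show ?thesis using hyp unfolding H' hypergraph_def by auto
qed

lemma one_step_good:
  fixes D0 :: "'a set \<Rightarrow> ('a \<rightharpoonup> 'v) \<Rightarrow> 'k::comm_monoid_add"
  assumes hyp: "hypergraph (fst H) (snd H)" and sd: "safe_deletion H H'"
    and col: "collection_over (snd H') D0"
  shows "\<exists>D1 :: 'a set \<Rightarrow> ('a \<rightharpoonup> 'v) \<Rightarrow> 'k. good (snd H') D0 (snd H) D1"
  using sd unfolding safe_deletion_def
proof (elim disjE bexE conjE)
  fix u assume uV: "u \<in> fst H" and H': "H' = (fst H - {u}, induced (snd H) (fst H - {u}))"
  have col': "collection_over (induced (snd H) (fst H - {u})) D0" using col unfolding H' by simp
  obtain D1 :: "'a set \<Rightarrow> ('a \<rightharpoonup> 'v) \<Rightarrow> 'k" where "good (induced (snd H) (fst H - {u})) D0 (snd H) D1"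
    using vert_step[OF hyp uV col'] by (elim exE) (erule that[unfolded good_def])
  then show ?thesis unfolding H' by (intro exI[of _ D1]) simp
next
  fix e f assume eE: "e \<in> snd H" and fE: "f \<in> snd H - {e}" and ef: "e \<subseteq> f"
    and H': "H' = (fst H, snd H - {e})"
  have col': "collection_over (snd H - {e}) D0" using col unfolding H' by simp
  have fE': "f \<in> snd H" and fe: "f \<noteq> e" using fE by auto
  have "good (snd H - {e}) D0 (snd H) (D0(e := marg (D0 f) e))"
    using cov_step[OF hyp eE fE' fe ef col'] unfolding good_def by simp
  then show ?thesis unfolding H' by (intro exI[of _ "D0(e := marg (D0 f) e)"]) simp
qed

lemma chain:
  assumes "safe_deletion\<^sup>*\<^sup>* H H0"
  shows "hypergraph (fst H) (snd H) \<Longrightarrow> collection_over (snd H0) (D0 :: 'a set \<Rightarrow> ('a \<rightharpoonup> 'v) \<Rightarrow> 'k::comm_monoid_add) \<Longrightarrow>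
    (\<exists>D1 :: 'a set \<Rightarrow> ('a \<rightharpoonup> 'v) \<Rightarrow> 'k. good (snd H0) D0 (snd H) D1)"
  using assms
proof (induction H rule: converse_rtranclp_induct)
  case base
  then show ?case by (intro exI[of _ D0] good_refl)
next
  case (step H H')
  have hH': "hypergraph (fst H') (snd H')" by (rule one_step_hyp[OF step.prems(1) step.hyps(1)])
  obtain D2 :: "'a set \<Rightarrow> ('a \<rightharpoonup> 'v) \<Rightarrow> 'k" where D2: "good (snd H0) D0 (snd H') D2"
    using step.IH[OF hH' step.prems(2)] by (elim exE) (erule that)
  have col2: "collection_over (snd H') D2" using D2 unfolding good_def by simp
  obtain D1 :: "'a set \<Rightarrow> ('a \<rightharpoonup> 'v) \<Rightarrow> 'k" where D1: "good (snd H') D2 (snd H) D1"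
    using one_step_good[OF step.prems(1) step.hyps(1) col2] by (elim exE) (erule that)
  show ?case by (intro exI[of _ D1] good_trans[OF D2 D1])
qed

theorem lemma8:
  fixes V0 V1 :: "'a set" and E0 E1 :: "'a set set"
    and D0 :: "'a set \<Rightarrow> ('a \<rightharpoonup> 'v) \<Rightarrow> 'k::comm_monoid_add"
  assumes "positive_monoid TYPE('k)"
    and "hypergraph V1 E1"
    and "safe_deletion\<^sup>*\<^sup>* (V1, E1) (V0, E0)"
    and "collection_over E0 D0"
  shows "\<exists>D1 :: 'a set \<Rightarrow> ('a \<rightharpoonup> 'v) \<Rightarrow> 'k. collection_over E1 D1 \<and>
           (\<forall>k::nat. k \<ge> 1 \<longrightarrow> (kwise_consistent k E0 D0 \<longleftrightarrow> kwise_consistent k E1 D1))"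
proof -
  obtain D1 :: "'a set \<Rightarrow> ('a \<rightharpoonup> 'v) \<Rightarrow> 'k" where "good E0 D0 E1 D1"
    using chain[OF assms(3), of D0] assms(2,4) by (auto elim!: that)
  then show ?thesis unfolding good_def by (intro exI[of _ D1])
qed

end
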